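(* Let $\mathcal C$ be a full trio. If the simultaneous unboundedness problem is decidable for $\mathcal C$, then the diagonal problem is decidable for $\mathcal C$.
   Context: A full trio is a nonempty class of (effectively represented) languages effectively closed under $B$-projection (keeping only symbols of $B$), $B$-upward closure (inserting arbitrary symbols of $B$), for every finite alphabet $B$, and under intersection with regular languages. For $A=\{a_1,\dots,a_n\}$ the Parikh image of $w$ is $(\#_{a_1}(w),\dots,\#_{a_n}(w))$. The diagonal problem: given $L\subseteq A^*$ in $\mathcal C$, decide whether every tuple $(m,\dots,m)\in\mathbb N^n$ is componentwise dominated by the Parikh image of some word of $L$. The SUP is this problem restricted to inputs $L\subseteq b_1^*\cdots b_n^*$ where $b_1,\dots,b_n$ is some enumeration of $A$. *)

theory Defs
  imports Main "HOL-Library.Nat_Bijection"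
begin

datatype recf = Zr | Sc | Id nat | Cn recf "recf list" | Pr recf recf | Mn recf

inductive rec_eval :: "recf \<Rightarrow> nat list \<Rightarrow> nat \<Rightarrow> bool" where
  zero: "rec_eval Zr xs 0"
| succ: "rec_eval Sc (x # xs) (Suc x)"
| proj: "i < length xs \<Longrightarrow> rec_eval (Id i) xs (xs ! i)"
| comp: "length ys = length gs \<Longrightarrow> (\<forall>i < length gs. rec_eval (gs ! i) xs (ys ! i))
          \<Longrightarrow> rec_eval f ys z \<Longrightarrow> rec_eval (Cn f gs) xs z"
| pr0: "rec_eval f xs y \<Longrightarrow> rec_eval (Pr f g) (0 # xs) y"
| prS: "rec_eval (Pr f g) (n # xs) y \<Longrightarrow> rec_eval g (n # y # xs) z
          \<Longrightarrow> rec_eval (Pr f g) (Suc n # xs) z"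
| mn: "rec_eval f (n # xs) 0 \<Longrightarrow> (\<forall>m < n. \<exists>y. y > 0 \<and> rec_eval f (m # xs) y)
          \<Longrightarrow> rec_eval (Mn f) xs n"

definition comp_on :: "nat set \<Rightarrow> (nat \<Rightarrow> nat) \<Rightarrow> bool" where
  "comp_on D f \<longleftrightarrow> (\<exists>p. \<forall>x\<in>D. rec_eval p [x] (f x))"

definition decidable_on :: "nat set \<Rightarrow> (nat \<Rightarrow> bool) \<Rightarrow> bool" where
  "decidable_on D P \<longleftrightarrow> (\<exists>f. comp_on D f \<and> (\<forall>x\<in>D. f x \<noteq> 0 \<longleftrightarrow> P x))"

type_synonym lang = "nat list set"

definition proj_lang :: "nat set \<Rightarrow> lang \<Rightarrow> lang" where
  "proj_lang B L = (filter (\<lambda>a. a \<in> B)) ` L"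

definition upclose_lang :: "nat set \<Rightarrow> lang \<Rightarrow> lang" where
  "upclose_lang B L = {w. \<exists>u\<in>L. \<exists>v. set v \<subseteq> B \<and> w \<in> shuffles u v}"

definition trip_decode :: "nat \<Rightarrow> nat \<times> nat \<times> nat" where
  "trip_decode t = (let (q, r) = prod_decode t; (a, q') = prod_decode r in (q, a, q'))"

definition nfa_trans :: "nat \<Rightarrow> (nat \<times> nat \<times> nat) set" where
  "nfa_trans c = trip_decode ` set_decode (fst (prod_decode c))"
definition nfa_init :: "nat \<Rightarrow> nat set" where
  "nfa_init c = set_decode (fst (prod_decode (snd (prod_decode c))))"
definition nfa_final :: "nat \<Rightarrow> nat set" where
  "nfa_final c = set_decode (snd (prod_decode (snd (prod_decode c))))"

fun reach :: "(nat \<times> nat \<times> nat) set \<Rightarrow> nat set \<Rightarrow> nat list \<Rightarrow> nat set" where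
  "reach T S [] = S"
| "reach T S (a # w) = reach T {q'. \<exists>q\<in>S. (q, a, q') \<in> T} w"

definition nfa_lang :: "nat \<Rightarrow> lang" where
  "nfa_lang c = {w. reach (nfa_trans c) (nfa_init c) w \<inter> nfa_final c \<noteq> {}}"

text \<open>An effectively represented class of languages: R is the set of valid
  representations (codes), lang r the language represented by r.\<close>
definition full_trio :: "nat set \<Rightarrow> (nat \<Rightarrow> lang) \<Rightarrow> bool" where
  "full_trio R lang \<longleftrightarrow>
     R \<noteq> {} \<and>
     (\<forall>r\<in>R. \<exists>A. finite A \<and> lang r \<subseteq> lists A) \<and>
     (\<exists>f. comp_on {prod_encode (r, set_encode B) | r B. r \<in> R \<and> finite B} f \<and>
        (\<forall>r\<in>R. \<forall>B. finite B \<longrightarrow> f (prod_encode (r, set_encode B)) \<in> R \<and>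
            lang (f (prod_encode (r, set_encode B))) = proj_lang B (lang r))) \<and>
     (\<exists>f. comp_on {prod_encode (r, set_encode B) | r B. r \<in> R \<and> finite B} f \<and>
        (\<forall>r\<in>R. \<forall>B. finite B \<longrightarrow> f (prod_encode (r, set_encode B)) \<in> R \<and>
            lang (f (prod_encode (r, set_encode B))) = upclose_lang B (lang r))) \<and>
     (\<exists>f. comp_on {prod_encode (r, c) | r c. r \<in> R} f \<and>
        (\<forall>r\<in>R. \<forall>c. f (prod_encode (r, c)) \<in> R \<and>
            lang (f (prod_encode (r, c))) = lang r \<inter> nfa_lang c))"

definition diag_inputs :: "nat set \<Rightarrow> (nat \<Rightarrow> lang) \<Rightarrow> nat set" where
  "diag_inputs R lang = {prod_encode (r, set_encode A) | r A.
      r \<in> R \<and> finite A \<and> lang r \<subseteq> lists A}"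

definition diag_answer :: "(nat \<Rightarrow> lang) \<Rightarrow> nat \<Rightarrow> bool" where
  "diag_answer lang x = (let (r, c) = prod_decode x; A = set_decode c in
      \<forall>m::nat. \<exists>w\<in>lang r. \<forall>a\<in>A. m \<le> count_list w a)"

fun bounded_lang :: "nat list \<Rightarrow> lang" where
  "bounded_lang [] = {[]}"
| "bounded_lang (b # bs) = {replicate k b @ w | k w. w \<in> bounded_lang bs}"

definition sup_inputs :: "nat set \<Rightarrow> (nat \<Rightarrow> lang) \<Rightarrow> nat set" where
  "sup_inputs R lang = {prod_encode (r, set_encode A) | r A.
      r \<in> R \<and> finite A \<and> lang r \<subseteq> lists A \<and>
      (\<exists>bs. distinct bs \<and> set bs = A \<and> lang r \<subseteq> bounded_lang bs)}"

end

theory Submission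
  imports Defs
begin

definition rc2 :: "(nat \<Rightarrow> nat \<Rightarrow> nat) \<Rightarrow> bool" where
  "rc2 g \<longleftrightarrow> (\<exists>p. \<forall>x y. rec_eval p [x, y] (g x y))"

lemma rec_eval_Cn1: "rec_eval g xs y \<Longrightarrow> rec_eval f [y] z \<Longrightarrow> rec_eval (Cn f [g]) xs z"
  by (rule rec_eval.comp[where ys="[y]"]) auto

lemma rec_eval_Cn2: "rec_eval g xs y \<Longrightarrow> rec_eval h xs y' \<Longrightarrow> rec_eval f [y, y'] z
   \<Longrightarrow> rec_eval (Cn f [g, h]) xs z"
  by (rule rec_eval.comp[where ys="[y, y']"]) (auto simp: less_Suc_eq nth_Cons')

lemma rec_eval_Cn3: "rec_eval g xs y \<Longrightarrow> rec_eval h xs y' \<Longrightarrow> rec_eval k xs y''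
   \<Longrightarrow> rec_eval f [y, y', y''] z \<Longrightarrow> rec_eval (Cn f [g, h, k]) xs z"
  by (rule rec_eval.comp[where ys="[y, y', y'']"]) (auto simp: less_Suc_eq nth_Cons')

lemma rec_eval_Id: "i < length xs \<Longrightarrow> z = xs ! i \<Longrightarrow> rec_eval (Id i) xs z"
  using rec_eval.proj by auto

lemma rec_eval_Sc: "z = Suc x \<Longrightarrow> rec_eval Sc (x # xs) z"
  using rec_eval.succ by auto

lemma rec_eval_Zr: "z = 0 \<Longrightarrow> rec_eval Zr xs z"
  using rec_eval.zero by auto

definition "p_add = Pr (Id 0) (Cn Sc [Id 1])"

lemma p_add: "rec_eval p_add [n, y] (n + y)"
  unfolding p_add_def
proof (induction n)
  case 0 then show ?case by (auto intro!: rec_eval.pr0 rec_eval_Id)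
next
  case (Suc n)
  show ?case
    by (rule rec_eval.prS[OF Suc]) (auto intro!: rec_eval_Cn1 rec_eval_Id rec_eval_Sc)
qed

lemma p_add': "z = n + y \<Longrightarrow> rec_eval p_add [n, y] z" using p_add by simp

definition "p_mult = Pr Zr (Cn p_add [Id 1, Id 2])"

lemma p_mult: "rec_eval p_mult [n, y] (n * y)"
  unfolding p_mult_def
proof (induction n)
  case 0 then show ?case by (auto intro!: rec_eval.pr0 rec_eval_Zr)
next
  case (Suc n)
  show ?case
    by (rule rec_eval.prS[OF Suc]) (auto intro!: rec_eval_Cn2 rec_eval_Id p_add')
qed

lemma p_mult': "z = n * y \<Longrightarrow> rec_eval p_mult [n, y] z" using p_mult by simp

definition "p_pred = Pr Zr (Id 0)"

lemma p_pred0: "rec_eval p_pred [n] (n - 1)"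
  unfolding p_pred_def
proof (induction n)
  case 0 then show ?case by (auto intro!: rec_eval.pr0 rec_eval_Zr)
next
  case (Suc n)
  show ?case by (rule rec_eval.prS[OF Suc]) (auto intro!: rec_eval_Id)
qed

lemma p_pred: "z = n - 1 \<Longrightarrow> rec_eval p_pred [n] z" using p_pred0 by simp

definition "p_sub' = Pr (Id 0) (Cn p_pred [Id 1])"

lemma p_sub': "rec_eval p_sub' [n, x] (x - n)"
  unfolding p_sub'_def
proof (induction n)
  case 0 then show ?case by (auto intro!: rec_eval.pr0 rec_eval_Id)
next
  case (Suc n)
  show ?case
    by (rule rec_eval.prS[OF Suc]) (auto intro!: rec_eval_Cn1 rec_eval_Id p_pred)
qed

definition "p_pw = Pr (Cn Sc [Zr]) (Cn p_mult [Id 1, Id 2])"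

lemma p_pw: "rec_eval p_pw [n, b] (b ^ n)"
  unfolding p_pw_def
proof (induction n)
  case 0 then show ?case by (auto intro!: rec_eval.pr0 rec_eval_Cn1 rec_eval_Zr rec_eval_Sc)
next
  case (Suc n)
  show ?case
    by (rule rec_eval.prS[OF Suc]) (auto intro!: rec_eval_Cn2 rec_eval_Id p_mult')
qed

definition "p_tri = Pr Zr (Cn p_add [Id 1, Cn Sc [Id 0]])"

lemma p_tri: "rec_eval p_tri [n] (triangle n)"
  unfolding p_tri_def
proof (induction n)
  case 0 then show ?case by (auto intro!: rec_eval.pr0 rec_eval_Zr)
next
  case (Suc n)
  show ?case
    by (rule rec_eval.prS[OF Suc]) (auto intro!: rec_eval_Cn2 rec_eval_Cn1 rec_eval_Id p_add' rec_eval_Sc)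
qed

lemma rc2_add: "rc2 (\<lambda>x y. x + y)"
  unfolding rc2_def using p_add by blast

lemma rc2_mult: "rc2 (\<lambda>x y. x * y)"
  unfolding rc2_def using p_mult by blast

lemma rc2_sub: "rc2 (\<lambda>x y. x - y)"
  unfolding rc2_def
  by (rule exI[of _ "Cn p_sub' [Id 1, Id 0]"]) (auto intro!: rec_eval_Cn2 rec_eval_Id p_sub')

lemma rc2_pow: "rc2 (\<lambda>x y. x ^ y)"
  unfolding rc2_def
  by (rule exI[of _ "Cn p_pw [Id 1, Id 0]"]) (auto intro!: rec_eval_Cn2 rec_eval_Id p_pw)

lemma rc2_enc: "rc2 (\<lambda>x y. prod_encode (x, y))"
  unfolding rc2_def
  by (rule exI[of _ "Cn p_add [Cn p_tri [Cn p_add [Id 0, Id 1]], Id 0]"])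
    (auto intro!: rec_eval_Cn2 rec_eval_Cn1 rec_eval_Id p_tri p_add' simp: prod_encode_def)

lemma rc2_progE: assumes "rc2 g" obtains p where "\<And>x y. rec_eval p [x, y] (g x y)"
  using assms that unfolding rc2_def by metis

lemma comp_onE: assumes "comp_on D f" obtains p where "\<And>x. x \<in> D \<Longrightarrow> rec_eval p [x] (f x)"
  using assms that unfolding comp_on_def by metis

lemma comp_id: "comp_on D (\<lambda>x. x)"
  unfolding comp_on_def by (rule exI[of _ "Id 0"]) (auto intro: rec_eval_Id)

fun constp :: "nat \<Rightarrow> recf" where
  "constp 0 = Zr" | "constp (Suc n) = Cn Sc [constp n]"

lemma constp: "rec_eval (constp c) xs c"
  by (induction c) (auto intro: rec_eval_Zr rec_eval_Cn1 rec_eval_Sc)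

lemma comp_const: "comp_on D (\<lambda>x. c)"
  unfolding comp_on_def using constp by blast

lemma comp_bin: assumes "rc2 g" "comp_on D f" "comp_on D h"
  shows "comp_on D (\<lambda>x. g (f x) (h x))"
proof -
  obtain pg where pg: "\<And>x y. rec_eval pg [x, y] (g x y)" using assms(1) unfolding rc2_def by blast
  obtain pf where pf: "\<And>x. x \<in> D \<Longrightarrow> rec_eval pf [x] (f x)" using assms(2) unfolding comp_on_def by blast
  obtain ph where ph: "\<And>x. x \<in> D \<Longrightarrow> rec_eval ph [x] (h x)" using assms(3) unfolding comp_on_def by blast
  show ?thesis unfolding comp_on_def
    by (rule exI[of _ "Cn pg [pf, ph]"]) (auto intro!: rec_eval_Cn2 pf ph pg)
qed

lemma comp_un: assumes "comp_on E g" "comp_on D f" "\<And>x. x \<in> D \<Longrightarrow> f x \<in> E"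
  shows "comp_on D (\<lambda>x. g (f x))"
proof -
  obtain pg where pg: "\<And>x. x \<in> E \<Longrightarrow> rec_eval pg [x] (g x)" using assms(1) unfolding comp_on_def by blast
  obtain pf where pf: "\<And>x. x \<in> D \<Longrightarrow> rec_eval pf [x] (f x)" using assms(2) unfolding comp_on_def by blast
  show ?thesis unfolding comp_on_def
    by (rule exI[of _ "Cn pg [pf]"]) (auto intro!: rec_eval_Cn1 pf pg assms(3))
qed

lemma comp_add[intro]: "comp_on D f \<Longrightarrow> comp_on D g \<Longrightarrow> comp_on D (\<lambda>x. f x + g x)"
  using comp_bin[OF rc2_add] .
lemma comp_mult[intro]: "comp_on D f \<Longrightarrow> comp_on D g \<Longrightarrow> comp_on D (\<lambda>x. f x * g x)"
  using comp_bin[OF rc2_mult] .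
lemma comp_sub[intro]: "comp_on D f \<Longrightarrow> comp_on D g \<Longrightarrow> comp_on D (\<lambda>x. f x - g x)"
  using comp_bin[OF rc2_sub] .
lemma comp_pow[intro]: "comp_on D f \<Longrightarrow> comp_on D g \<Longrightarrow> comp_on D (\<lambda>x. f x ^ g x)"
  using comp_bin[OF rc2_pow] .
lemma comp_enc[intro]: "comp_on D f \<Longrightarrow> comp_on D g \<Longrightarrow> comp_on D (\<lambda>x. prod_encode (f x, g x))"
  using comp_bin[OF rc2_enc] .
lemma comp_Suc[intro]: "comp_on D f \<Longrightarrow> comp_on D (\<lambda>x. Suc (f x))"
  using comp_add[OF _ comp_const, of D f 1] by simp

lemma comp_tri[intro]: "comp_on D f \<Longrightarrow> comp_on D (\<lambda>x. triangle (f x))"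
  by (rule comp_un[where E=UNIV]) (auto simp: comp_on_def intro: p_tri)

lemma comp_if0[intro]: assumes "comp_on D c" "comp_on D u" "comp_on D v"
  shows "comp_on D (\<lambda>x. if c x = 0 then u x else v x)"
proof -
  have "comp_on D (\<lambda>x. (1 - c x) * u x + (1 - (1 - c x)) * v x)"
    using assms by (intro comp_add comp_mult comp_sub comp_const)
  moreover have "(\<lambda>x. (1 - c x) * u x + (1 - (1 - c x)) * v x) = (\<lambda>x. if c x = 0 then u x else v x)"
    by auto
  ultimately show ?thesis by simp
qed

lemma comp_if_le[intro]: assumes "comp_on D f" "comp_on D g" "comp_on D u" "comp_on D v"
  shows "comp_on D (\<lambda>x. if f x \<le> g x then u x else v x)"
  using comp_if0[OF comp_sub[OF assms(1,2)] assms(3,4)] by simp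

lemma comp_if_eq[intro]: assumes "comp_on D f" "comp_on D g" "comp_on D u" "comp_on D v"
  shows "comp_on D (\<lambda>x. if f x = g x then u x else v x)"
proof -
  have "comp_on D (\<lambda>x. if (f x - g x) + (g x - f x) = 0 then u x else v x)"
    using assms by (intro comp_if0 comp_add comp_sub)
  moreover have "\<And>x. ((f x - g x) + (g x - f x) = 0) = (f x = g x)" by auto
  ultimately show ?thesis by simp
qed

abbreviation pfst :: "nat \<Rightarrow> nat" where "pfst z \<equiv> fst (prod_decode z)"
abbreviation psnd :: "nat \<Rightarrow> nat" where "psnd z \<equiv> snd (prod_decode z)"

lemma comp_least_rc2:
  assumes "rc2 g" "\<And>x. x \<in> D \<Longrightarrow> \<exists>q. g q x = 0"
  shows "comp_on D (\<lambda>x. LEAST q. g q x = 0)"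
proof -
  obtain pg where pg: "\<And>x y. rec_eval pg [x, y] (g x y)" using assms(1) unfolding rc2_def by blast
  show ?thesis unfolding comp_on_def
  proof (rule exI[of _ "Mn pg"], intro ballI)
    fix x assume "x \<in> D"
    then obtain q where q: "g q x = 0" using assms(2) by blast
    have "g (LEAST q. g q x = 0) x = 0" using q by (rule LeastI)
    moreover have "\<forall>m < (LEAST q. g q x = 0). \<exists>y>0. rec_eval pg [m, x] y"
      using not_less_Least pg by blast
    ultimately show "rec_eval (Mn pg) [x] (LEAST q. g q x = 0)"
      using pg by (metis rec_eval.mn)
  qed
qed

lemma triangle_ge: "n \<le> triangle n"
  by (induction n) auto

lemma prod_decode_least:
  fixes z :: nat
  defines "s \<equiv> LEAST s. z < triangle (Suc s)"
  shows "prod_decode z = (z - triangle s, s - (z - triangle s))"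
proof -
  have ex: "z < triangle (Suc z)" using triangle_ge[of "Suc z"] by simp
  have 1: "z < triangle (Suc s)" unfolding s_def using ex by (rule LeastI)
  have 2: "triangle s \<le> z"
  proof (cases s)
    case 0 then show ?thesis by simp
  next
    case (Suc s')
    then have "s' < s" by simp
    then have "\<not> z < triangle (Suc s')" unfolding s_def by (rule not_less_Least)
    then show ?thesis using Suc by simp
  qed
  have 3: "z - triangle s \<le> s" using 1 2 by simp
  have "prod_encode (z - triangle s, s - (z - triangle s)) = z"
    using 2 3 by (simp add: prod_encode_def)
  then show ?thesis by (metis prod_encode_inverse)
qed

lemma comp_least_aux: "comp_on UNIV (\<lambda>z. LEAST s. 1 - (triangle (Suc s) - z) = 0)"
proof (rule comp_least_rc2)
  obtain ps where ps: "\<And>x y. rec_eval ps [x, y] (x - y)" using rc2_sub unfolding rc2_def by blast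
  show "rc2 (\<lambda>s z. 1 - (triangle (Suc s) - z))"
    unfolding rc2_def
    by (rule exI[of _ "Cn ps [constp 1, Cn ps [Cn p_tri [Cn Sc [Id 0]], Id 1]]"])
      (auto intro!: rec_eval_Cn2 rec_eval_Cn1 rec_eval_Id ps p_tri constp rec_eval_Sc rec_eval.zero)
  fix z :: nat
  show "\<exists>q. 1 - (triangle (Suc q) - z) = 0"
    using triangle_ge[of "Suc z"] by (intro exI[of _ z]) simp
qed

lemma least_aux_eq: "(LEAST s. 1 - (triangle (Suc s) - z) = 0) = (LEAST s. z < triangle (Suc s))"
proof -
  have "\<And>s. (1 - (triangle (Suc s) - z) = 0) = (z < triangle (Suc s))" by auto
  then show ?thesis by simp
qed

lemma comp_pfst0: "comp_on UNIV pfst"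
proof -
  have "comp_on UNIV (\<lambda>z. z - triangle (LEAST s. 1 - (triangle (Suc s) - z) = 0))"
    by (intro comp_sub comp_tri comp_id comp_least_aux)
  then show ?thesis unfolding least_aux_eq prod_decode_least by simp
qed

lemma comp_psnd0: "comp_on UNIV psnd"
proof -
  have "comp_on UNIV (\<lambda>z. (LEAST s. 1 - (triangle (Suc s) - z) = 0) - (z - triangle (LEAST s. 1 - (triangle (Suc s) - z) = 0)))"
    by (intro comp_sub comp_tri comp_id comp_least_aux)
  then show ?thesis unfolding least_aux_eq prod_decode_least by simp
qed

lemma comp_pfst[intro]: "comp_on D f \<Longrightarrow> comp_on D (\<lambda>x. pfst (f x))"
  by (rule comp_un[OF comp_pfst0]) auto
lemma comp_psnd[intro]: "comp_on D f \<Longrightarrow> comp_on D (\<lambda>x. psnd (f x))"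
  by (rule comp_un[OF comp_psnd0]) auto

lemma comp_least:
  assumes "comp_on UNIV (\<lambda>z. g (pfst z) (psnd z))" "\<And>x. x \<in> D \<Longrightarrow> \<exists>q. g q x = 0"
  shows "comp_on D (\<lambda>x. LEAST q. g q x = 0)"
proof (rule comp_least_rc2[OF _ assms(2)])
  obtain pg where pg: "\<And>z. rec_eval pg [z] (g (pfst z) (psnd z))" using assms(1) unfolding comp_on_def by blast
  obtain pe where pe: "\<And>x y. rec_eval pe [x, y] (prod_encode (x, y))" using rc2_enc unfolding rc2_def by blast
  have pg': "\<And>x y. rec_eval pg [prod_encode (x, y)] (g x y)" using pg by (metis fst_conv snd_conv prod_encode_inverse)
  show "rc2 g" unfolding rc2_def
    by (rule exI[of _ "Cn pg [Cn pe [Id 0, Id 1]]"])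
      (auto intro!: rec_eval_Cn1 rec_eval_Cn2 rec_eval_Id pe pg')
qed

lemma comp_sum:
  assumes "comp_on D N" "comp_on E (\<lambda>z. F (pfst z) (psnd z))"
    "\<And>x i. x \<in> D \<Longrightarrow> i < N x \<Longrightarrow> prod_encode (i, x) \<in> E"
  shows "comp_on D (\<lambda>x. \<Sum>i<N x. F i x)"
proof -
  obtain pN where pN: "\<And>x. x \<in> D \<Longrightarrow> rec_eval pN [x] (N x)" using assms(1) unfolding comp_on_def by blast
  obtain pF where pF: "\<And>z. z \<in> E \<Longrightarrow> rec_eval pF [z] (F (pfst z) (psnd z))" using assms(2) unfolding comp_on_def by blast
  obtain pe where pe: "\<And>x y. rec_eval pe [x, y] (prod_encode (x, y))" using rc2_enc unfolding rc2_def by blast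
  define G where "G = Pr Zr (Cn p_add [Id 1, Cn pF [Cn pe [Id 0, Id 2]]])"
  have G: "rec_eval G [n, x] (\<Sum>i<n. F i x)" if "x \<in> D" "n \<le> N x" for n x
    using that(2)
  proof (induction n)
    case 0 then show ?case unfolding G_def by (auto intro!: rec_eval.pr0 rec_eval.zero)
  next
    case (Suc n)
    then have IH: "rec_eval G [n, x] (\<Sum>i<n. F i x)" by simp
    have inE: "prod_encode (n, x) \<in> E" using assms(3)[OF that(1)] Suc.prems by simp
    have "rec_eval pF [prod_encode (n, x)] (F n x)" using pF[OF inE] by simp
    then have a: "rec_eval (Cn pF [Cn pe [Id 0, Id 2]]) [n, (\<Sum>i<n. F i x), x] (F n x)"
      by (intro rec_eval_Cn1[where y="prod_encode (n, x)"] rec_eval_Cn2[where y=n and y'=x])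
        (auto intro: rec_eval_Id pe)
    have "rec_eval (Cn p_add [Id 1, Cn pF [Cn pe [Id 0, Id 2]]]) [n, (\<Sum>i<n. F i x), x] (\<Sum>i<Suc n. F i x)"
      by (rule rec_eval_Cn2[OF _ a]) (auto intro: rec_eval_Id p_add')
    then show ?case unfolding G_def
      by (rule rec_eval.prS[OF IH[unfolded G_def]])
  qed
  show ?thesis unfolding comp_on_def
    by (rule exI[of _ "Cn G [pN, Id 0]"]) (auto intro!: rec_eval_Cn2 rec_eval_Id pN G)
qed


lemma comp_sum_UNIV[intro]:
  assumes "comp_on D N" "comp_on UNIV (\<lambda>z. F (pfst z) (psnd z))"
  shows "comp_on D (\<lambda>x. \<Sum>i<N x. F i x)"
  by (rule comp_sum[OF assms]) simp

lemma div_least: "(m::nat) div d = (LEAST q. (if d = 0 then 0 else if Suc m \<le> d * Suc q then 0 else 1) = (0::nat))"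
proof (cases "d = 0")
  case True then show ?thesis by simp
next
  case False
  show ?thesis
  proof (rule Least_equality[symmetric])
    have "m mod d < d" using False by simp
    moreover have "d * (m div d) + m mod d = m" by (rule mult_div_mod_eq)
    ultimately have "m < d * Suc (m div d)" unfolding mult_Suc_right by linarith
    then show "(if d = 0 then 0 else if Suc m \<le> d * Suc (m div d) then 0 else 1) = (0::nat)" by simp
  next
    fix y assume "(if d = 0 then 0 else if Suc m \<le> d * Suc y then 0 else 1) = (0::nat)"
    then have "m < d * Suc y" using False by (auto split: if_splits)
    then have "m < Suc y * d" by (simp add: mult.commute)
    then have "m div d < Suc y" by (rule less_mult_imp_div_less)
    then show "m div d \<le> y" by simp
  qed
qed


lemma comp_div0: "comp_on UNIV (\<lambda>z. pfst z div psnd z)"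
proof -
  have "comp_on UNIV (\<lambda>z. LEAST q. (if psnd z = 0 then 0 else if Suc (pfst z) \<le> psnd z * Suc q then 0 else 1) = (0::nat))"
    apply (rule comp_least)
    apply (intro comp_if_le comp_if0 comp_pfst comp_psnd comp_id comp_const comp_mult comp_Suc)
    subgoal for z
      by (rule exI[of _ "pfst z"]) (cases "psnd z"; simp)
    done
  then show ?thesis by (simp only: div_least[symmetric])
qed

lemma comp_div[intro]: "comp_on D f \<Longrightarrow> comp_on D g \<Longrightarrow> comp_on D (\<lambda>x. f x div g x)"
  using comp_un[OF comp_div0 comp_enc[of D f g]] by simp

lemma comp_mod[intro]: assumes "comp_on D f" "comp_on D g" shows "comp_on D (\<lambda>x. f x mod g x)"
proof -
  have "comp_on D (\<lambda>x. f x - g x * (f x div g x))" using assms by (intro comp_sub comp_mult comp_div)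
  then show ?thesis unfolding minus_mult_div_eq_mod .
qed


lemma count_shuffles: "zs \<in> shuffles xs ys \<Longrightarrow> count_list zs c = count_list xs c + count_list ys c"
  by (induction xs ys arbitrary: zs rule: shuffles.induct) auto

lemma shuffles_filter_partition: "zs \<in> shuffles (filter P zs) (filter (\<lambda>x. \<not> P x) zs)"
  by (induction zs) (auto intro: Cons_in_shuffles_leftI Cons_in_shuffles_rightI)

lemma reach_append: "reach T S (u @ v) = reach T (reach T S u) v"
  by (induction u arbitrary: S) auto

lemma reach_snoc: "reach T S (u @ [x]) = {q'. \<exists>q\<in>reach T S u. (q, x, q') \<in> T}"
  by (simp add: reach_append)

lemma reach_mono: "S \<subseteq> S' \<Longrightarrow> reach T S w \<subseteq> reach T S' w"
proof (induction w arbitrary: S S')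
  case Nil then show ?case by simp
next
  case (Cons a w)
  have "{q'. \<exists>q\<in>S. (q, a, q') \<in> T} \<subseteq> {q'. \<exists>q\<in>S'. (q, a, q') \<in> T}" using Cons.prems by blast
  then show ?case using Cons.IH by simp
qed

lemma Nil_bounded: "[] \<in> bounded_lang bs"
  by (induction bs) (auto intro!: exI[of _ 0])

lemma bounded_upt:
  "sorted u \<Longrightarrow> set u \<subseteq> {a..<a+n} \<Longrightarrow> u \<in> bounded_lang [a..<a+n]"
proof (induction n arbitrary: a u)
  case 0 then show ?case by simp
next
  case (Suc n)
  have eq: "[a..<a + Suc n] = a # [Suc a..<Suc a + n]" by (simp add: upt_conv_Cons)
  show ?case using Suc.prems unfolding eq
  proof (induction u)
    case Nil
    show ?case by (rule Nil_bounded)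
  next
    case (Cons x u)
    show ?case
    proof (cases "x = a")
      case True
      have "u \<in> bounded_lang (a # [Suc a..<Suc a + n])" using Cons by auto
      then obtain k w where "u = replicate k a @ w" "w \<in> bounded_lang [Suc a..<Suc a + n]" by auto
      then show ?thesis using True by (auto intro!: exI[of _ "Suc k"] exI[of _ w])
    next
      case False
      then have "x > a" using Cons.prems by auto
      have "\<forall>y\<in>set u. x \<le> y \<and> y < a + Suc n" using Cons.prems by auto
      then have "set (x # u) \<subseteq> {Suc a..<Suc a + n}" using Cons.prems \<open>x > a\<close> by fastforce
      then have "x # u \<in> bounded_lang [Suc a..<Suc a + n]" using Suc.IH Cons.prems by blast
      then show ?thesis by (auto intro!: exI[of _ 0])
    qed
  qed
qed

definition Qseg :: "lang \<Rightarrow> nat list \<Rightarrow> nat \<Rightarrow> bool" where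
  "Qseg L bs m \<longleftrightarrow> (\<exists>w\<in>L. \<exists>ws rest. length ws = length bs \<and> w = concat ws @ rest \<and>
      (\<forall>j<length bs. m \<le> count_list (ws ! j) (bs ! j)))"

lemma Qseg_mono: "Qseg L bs m \<Longrightarrow> m' \<le> m \<Longrightarrow> Qseg L bs m'"
  unfolding Qseg_def by (meson order_trans)

lemma greedy:
  "finite A \<Longrightarrow> card A = k \<Longrightarrow> (\<forall>b\<in>A. k * m \<le> count_list w b) \<Longrightarrow>
   \<exists>bs ws rest. distinct bs \<and> set bs = A \<and> length ws = length bs \<and> w = concat ws @ rest \<and>
     (\<forall>j<length bs. m \<le> count_list (ws ! j) (bs ! j))"
proof (induction k arbitrary: A w)
  case 0
  then show ?case by (auto intro!: exI[of _ "[]"])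
next
  case (Suc k)
  define P where "P t \<longleftrightarrow> (\<exists>b\<in>A. m \<le> count_list (take t w) b)" for t
  have "A \<noteq> {}" using Suc.prems by auto
  then obtain b0 where "b0 \<in> A" by auto
  then have "Suc k * m \<le> count_list w b0" using Suc.prems by auto
  then have "P (length w)" unfolding P_def using \<open>b0 \<in> A\<close> by (intro bexI[of _ b0]) (simp, linarith)
  define t0 where "t0 = (LEAST t. P t)"
  have Pt0: "P t0" unfolding t0_def by (rule LeastI) fact
  have t0le: "t0 \<le> length w" unfolding t0_def by (rule Least_le) fact
  obtain b where b: "b \<in> A" "m \<le> count_list (take t0 w) b" using Pt0 unfolding P_def by blast
  have small: "count_list (take t0 w) c \<le> m" if "c \<in> A" for c
  proof (cases t0)
    case 0 then show ?thesis by simp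
  next
    case (Suc t1)
    then have "\<not> P t1" unfolding t0_def using not_less_Least by (metis lessI)
    then have "count_list (take t1 w) c < m" using that unfolding P_def by auto
    moreover have "take t0 w = take t1 w @ [w ! t1]" using Suc t0le by (simp add: take_Suc_conv_app_nth)
    ultimately show ?thesis by auto
  qed
  define A' where "A' = A - {b}"
  have cA': "card A' = k" using Suc.prems b unfolding A'_def by auto
  have "\<forall>c\<in>A'. k * m \<le> count_list (drop t0 w) c"
  proof
    fix c assume c: "c \<in> A'"
    have "count_list w c = count_list (take t0 w) c + count_list (drop t0 w) c"
      by (metis append_take_drop_id count_list_append)
    moreover have "Suc k * m \<le> count_list w c" using Suc.prems c unfolding A'_def by auto
    moreover have "count_list (take t0 w) c \<le> m" using small c unfolding A'_def by auto
    ultimately show "k * m \<le> count_list (drop t0 w) c" by simp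
  qed
  then obtain bs ws rest where IH: "distinct bs" "set bs = A'" "length ws = length bs"
    "drop t0 w = concat ws @ rest" "\<forall>j<length bs. m \<le> count_list (ws ! j) (bs ! j)"
    using Suc.IH[of A' "drop t0 w"] cA' Suc.prems(1) unfolding A'_def by blast
  show ?case
  proof (intro exI conjI)
    show "distinct (b # bs)" using IH unfolding A'_def by auto
    show "set (b # bs) = A" using IH b unfolding A'_def by auto
    show "length (take t0 w # ws) = length (b # bs)" using IH by simp
    have "w = take t0 w @ drop t0 w" by simp
    then show "w = concat (take t0 w # ws) @ rest" using IH(4) by simp
    show "\<forall>j<length (b # bs). m \<le> count_list ((take t0 w # ws) ! j) ((b # bs) ! j)"
    proof (intro allI impI)
      fix j assume "j < length (b # bs)"
      then show "m \<le> count_list ((take t0 w # ws) ! j) ((b # bs) ! j)"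
        using IH(5) b by (cases j) auto
    qed
  qed
qed

lemma diag_to_Qseg:
  assumes "finite A" "\<forall>m. \<exists>w\<in>L. \<forall>c\<in>A. m \<le> count_list w c"
  shows "\<exists>bs. distinct bs \<and> set bs = A \<and> (\<forall>m. Qseg L bs m)"
proof (rule ccontr)
  assume neg: "\<not> ?thesis"
  define P where "P = {bs. distinct bs \<and> set bs = A}"
  have finP: "finite P"
  proof (rule finite_subset[OF _ finite_lists_length_le[OF assms(1), of "card A"]])
    show "P \<subseteq> {xs. set xs \<subseteq> A \<and> length xs \<le> card A}"
      unfolding P_def using distinct_card by fastforce
  qed
  define f where "f bs = (LEAST m. \<not> Qseg L bs m)" for bs
  have nf: "\<not> Qseg L bs (f bs)" if "bs \<in> P" for bs
    using neg that unfolding P_def f_def by (metis (mono_tags, lifting) LeastI mem_Collect_eq)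
  define M where "M = Max (f ` P)"
  obtain w where w: "w \<in> L" "\<forall>c\<in>A. card A * M \<le> count_list w c" using assms(2) by blast
  obtain bs ws rest where g: "distinct bs" "set bs = A" "length ws = length bs" "w = concat ws @ rest"
     "\<forall>j<length bs. M \<le> count_list (ws ! j) (bs ! j)"
    using greedy[OF assms(1) refl w(2)] by blast
  have "Qseg L bs M" unfolding Qseg_def using w(1) g by blast
  moreover have "bs \<in> P" using g unfolding P_def by simp
  moreover have "f bs \<le> M" unfolding M_def using finP \<open>bs \<in> P\<close> by simp
  ultimately show False using nf Qseg_mono by blast
qed


definition Tset :: "nat set \<Rightarrow> nat \<Rightarrow> nat \<Rightarrow> nat list \<Rightarrow> (nat \<times> nat \<times> nat) set" where
  "Tset A a n bs = {(i, e, i) | i e. i \<le> n \<and> e \<in> A} \<union> {(i, bs ! j, Suc n + j) | i j. j < n \<and> i \<le> j}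
     \<union> {(Suc n + j, a + j, j) | j. j < n}"

definition Nlang :: "(nat \<times> nat \<times> nat) set \<Rightarrow> nat \<Rightarrow> lang" where
  "Nlang T n = {w. reach T {0} w \<inter> {..n} \<noteq> {}}"

locale psetup =
  fixes A :: "nat set" and a n :: nat and bs :: "nat list"
  assumes dist: "distinct bs" and setbs: "set bs = A" and lenbs: "length bs = n"
    and Abound: "\<And>e. e \<in> A \<Longrightarrow> e < a"
begin

abbreviation "T \<equiv> Tset A a n bs"
abbreviation "C \<equiv> {a..<a+n}"

lemma bs_A: "j < n \<Longrightarrow> bs ! j \<in> A" using setbs lenbs by auto
lemma bs_lt: "j < n \<Longrightarrow> bs ! j < a" using bs_A Abound by auto
lemma A_notC: "e \<in> A \<Longrightarrow> e \<notin> C" using Abound by fastforce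
lemma bs_inj: "i < n \<Longrightarrow> j < n \<Longrightarrow> bs ! i = bs ! j \<longleftrightarrow> i = j"
  using dist lenbs by (simp add: nth_eq_iff_index_eq)

definition jq :: "nat \<Rightarrow> nat" where "jq q = (if q \<le> n then q else q - Suc n)"

definition INV :: "nat \<Rightarrow> nat list \<Rightarrow> bool" where
  "INV q p \<longleftrightarrow> sorted (filter (\<lambda>x. x \<in> C) p) \<and> (\<forall>x\<in>set p. x \<in> C \<longrightarrow> x \<le> a + jq q) \<and>
     (\<forall>i<n. count_list p (a + i) + (if q = Suc n + i then 1 else 0) \<le> count_list p (bs ! i)) \<and>
     (q \<le> n \<or> (\<exists>j<n. q = Suc n + j))"

lemma INV_step:
  assumes inv: "INV q p" and tr: "(q, x, q') \<in> T"
  shows "INV q' (p @ [x])"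
proof -
  from tr consider (loop) i e where "q = i" "x = e" "q' = i" "i \<le> n" "e \<in> A"
    | (tomid) i j where "q = i" "x = bs ! j" "q' = Suc n + j" "j < n" "i \<le> j"
    | (frommid) j where "q = Suc n + j" "x = a + j" "q' = j" "j < n"
    unfolding Tset_def by blast
  then show ?thesis
  proof cases
    case loop
    have xC: "x \<notin> C" using loop A_notC by auto
    have "x \<noteq> a + i'" if "i' < n" for i' using xC that by auto
    then show ?thesis using inv loop xC unfolding INV_def by (auto simp: jq_def)
  next
    case tomid
    have xC: "x \<notin> C" using tomid A_notC bs_A by auto
    have ne: "x \<noteq> a + i'" if "i' < n" for i' using xC that by auto
    have q0: "q \<le> n" using tomid by simp
    have cnt: "count_list p (a + i') + (if q' = Suc n + i' then 1 else 0) \<le> count_list (p @ [x]) (bs ! i')"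
      if "i' < n" for i'
    proof -
      have old: "count_list p (a + i') \<le> count_list p (bs ! i')"
        using inv that q0 unfolding INV_def by (auto split: if_splits)
      show ?thesis
      proof (cases "i' = j")
        case True then show ?thesis using old tomid by simp
      next
        case False
        then have "q' \<noteq> Suc n + i'" using tomid by simp
        then show ?thesis using old by simp
      qed
    qed
    have "\<forall>y\<in>set p. y \<in> C \<longrightarrow> y \<le> a + jq q" using inv unfolding INV_def by blast
    then have "\<forall>y\<in>set p. y \<in> C \<longrightarrow> y \<le> a + jq q'" using tomid by (auto simp: jq_def)
    then show ?thesis using inv tomid xC ne cnt unfolding INV_def by auto
  next
    case frommid
    have xC: "x \<in> C" using frommid by auto
    have bsne: "bs ! i' \<noteq> a + j" if "i' < n" for i' using bs_lt[OF that] by simp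
    have jqq: "jq q = j" "jq q' = j" using frommid by (auto simp: jq_def)
    have le: "\<forall>y\<in>set p. y \<in> C \<longrightarrow> y \<le> a + j" using inv jqq unfolding INV_def by simp
    have sorted: "sorted (filter (\<lambda>x. x \<in> C) (p @ [x]))"
      using inv le xC frommid unfolding INV_def by (auto simp: sorted_append)
    have cnt: "count_list (p @ [x]) (a + i') + (if q' = Suc n + i' then 1 else 0) \<le> count_list (p @ [x]) (bs ! i')"
      if "i' < n" for i'
    proof -
      have old: "count_list p (a + i') + (if q = Suc n + i' then 1 else 0) \<le> count_list p (bs ! i')"
        using inv that unfolding INV_def by blast
      show ?thesis
      proof (cases "i' = j")
        case True then show ?thesis using old frommid bsne[OF that] by simp
      next
        case False
        then show ?thesis using old frommid bsne[OF that] by simp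
      qed
    qed
    show ?thesis unfolding INV_def using sorted cnt le frommid by (auto simp: jq_def)
  qed
qed

lemma INV_reach: "q \<in> reach T {0} p \<Longrightarrow> INV q p"
proof (induction p arbitrary: q rule: rev_induct)
  case Nil then show ?case by (simp add: INV_def jq_def)
next
  case (snoc x p)
  then obtain q0 where "q0 \<in> reach T {0} p" "(q0, x, q) \<in> T" by (auto simp: reach_snoc)
  then show ?case using snoc.IH INV_step by blast
qed

lemma Nlang_sound:
  assumes "w \<in> Nlang T n"
  shows "sorted (filter (\<lambda>x. x \<in> C) w)" "\<And>i. i < n \<Longrightarrow> count_list w (a + i) \<le> count_list w (bs ! i)"
proof -
  obtain q where q: "q \<in> reach T {0} w" "q \<le> n" using assms unfolding Nlang_def by auto
  have "INV q w" using INV_reach q(1) .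
  then show "sorted (filter (\<lambda>x. x \<in> C) w)" unfolding INV_def by blast
  fix i assume "i < n"
  then show "count_list w (a + i) \<le> count_list w (bs ! i)"
    using \<open>INV q w\<close> q(2) unfolding INV_def by fastforce
qed

definition ins :: "nat \<Rightarrow> nat list \<Rightarrow> nat list" where
  "ins j v = concat (map (\<lambda>x. if x = bs ! j then [x, a + j] else [x]) v)"

lemma ins_Nil[simp]: "ins j [] = []" by (simp add: ins_def)
lemma ins_Cons: "ins j (x # v) = (if x = bs ! j then [x, a + j] else [x]) @ ins j v"
  by (simp add: ins_def)

lemma ins_reach: "j < n \<Longrightarrow> set v \<subseteq> A \<Longrightarrow> \<exists>q\<in>S. q \<le> j \<Longrightarrow> \<exists>q\<in>reach T S (ins j v). q \<le> j"
proof (induction v arbitrary: S)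
  case Nil then show ?case by simp
next
  case (Cons x v)
  obtain q where q: "q \<in> S" "q \<le> j" using Cons.prems by blast
  have xA: "x \<in> A" using Cons.prems by simp
  have "\<exists>q'\<in>reach T S (if x = bs ! j then [x, a + j] else [x]). q' \<le> j"
  proof (cases "x = bs ! j")
    case True
    have "(q, x, Suc n + j) \<in> T" using True q Cons.prems(1) unfolding Tset_def by blast
    moreover have "(Suc n + j, a + j, j) \<in> T" using Cons.prems(1) unfolding Tset_def by blast
    ultimately have "j \<in> reach T S [x, a + j]" using q by auto
    then show ?thesis using True by auto
  next
    case False
    have "(q, x, q) \<in> T" using q xA Cons.prems(1) unfolding Tset_def by auto
    then have "q \<in> reach T S [x]" using q by auto
    then show ?thesis using False q by auto
  qed
  then show ?case using Cons.IH[of "reach T S (if x = bs ! j then [x, a + j] else [x])"] Cons.prems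
    by (auto simp: ins_Cons reach_append)
qed

lemma rest_reach: "set v \<subseteq> A \<Longrightarrow> \<exists>q\<in>S. q \<le> n \<Longrightarrow> \<exists>q\<in>reach T S v. q \<le> n"
proof (induction v arbitrary: S)
  case Nil then show ?case by simp
next
  case (Cons x v)
  obtain q where q: "q \<in> S" "q \<le> n" using Cons.prems by blast
  have "(q, x, q) \<in> T" using q Cons.prems unfolding Tset_def by auto
  then have "q \<in> reach T S [x]" using q by auto
  then show ?case using Cons.IH[of "reach T S [x]"] Cons.prems q by (auto simp: reach_append)
qed

lemma segs_reach: "k \<le> n \<Longrightarrow> (\<forall>j<k. set (ws ! j) \<subseteq> A) \<Longrightarrow>
   \<exists>q\<in>reach T {0} (concat (map (\<lambda>j. ins j (ws ! j)) [0..<k])). q \<le> k"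
proof (induction k)
  case 0 then show ?case by simp
next
  case (Suc k)
  then obtain q where q: "q \<in> reach T {0} (concat (map (\<lambda>j. ins j (ws ! j)) [0..<k]))" "q \<le> k" by auto
  have "\<exists>q\<in>reach T (reach T {0} (concat (map (\<lambda>j. ins j (ws ! j)) [0..<k]))) (ins k (ws ! k)). q \<le> k"
    using Suc.prems q by (intro ins_reach) auto
  then obtain q' where "q' \<in> reach T (reach T {0} (concat (map (\<lambda>j. ins j (ws ! j)) [0..<k]))) (ins k (ws ! k))" "q' \<le> k" by blast
  then show ?case by (auto simp: reach_append intro!: bexI[of _ q'])
qed

lemma filter_ins: "j < n \<Longrightarrow> set v \<subseteq> A \<Longrightarrow> filter (\<lambda>x. x \<notin> C) (ins j v) = v"
proof (induction v)
  case Nil then show ?case by simp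
next
  case (Cons x v)
  have xC: "x \<notin> C" using A_notC Cons.prems by auto
  have jC: "a + j \<in> C" using Cons.prems by auto
  have "filter (\<lambda>x. x \<notin> C) (if x = bs ! j then [x, a + j] else [x]) = [x]" using xC jC by auto
  then show ?case using Cons by (simp add: ins_Cons del: atLeastLessThan_iff)
qed

lemma count_ins: "j < n \<Longrightarrow> set v \<subseteq> A \<Longrightarrow> count_list (ins j v) (a + j) = count_list v (bs ! j)"
proof (induction v)
  case Nil then show ?case by simp
next
  case (Cons x v)
  have "x \<noteq> a + j" using Cons.prems Abound by fastforce
  then show ?case using Cons by (auto simp: ins_Cons)
qed

lemma complete:
  assumes L: "L \<subseteq> lists A" and Q: "Qseg L bs m"
  shows "\<exists>u\<in>proj_lang C (upclose_lang C L \<inter> Nlang T n). \<forall>c\<in>C. m \<le> count_list u c"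
proof -
  obtain w ws rest where w: "w \<in> L" "length ws = n" "w = concat ws @ rest"
      "\<forall>j<n. m \<le> count_list (ws ! j) (bs ! j)"
    using Q lenbs unfolding Qseg_def by blast
  have wA: "set w \<subseteq> A" using L w(1) by auto
  have wsA: "\<forall>j<n. set (ws ! j) \<subseteq> A"
  proof (intro allI impI)
    fix j assume "j < n"
    then have "ws ! j \<in> set ws" using w(2) by simp
    then show "set (ws ! j) \<subseteq> A" using wA w(3) by auto
  qed
  have restA: "set rest \<subseteq> A" using wA w(3) by auto
  define pre where "pre = concat (map (\<lambda>j. ins j (ws ! j)) [0..<n])"
  define w' where "w' = pre @ rest"
  have fpre: "filter (\<lambda>x. x \<notin> C) pre = concat ws"
  proof -
    have "filter (\<lambda>x. x \<notin> C) pre = concat (map (\<lambda>j. ws ! j) [0..<n])"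
      unfolding pre_def filter_concat map_map o_def using wsA
      by (intro arg_cong[where f=concat] map_cong refl filter_ins) auto
    also have "map (\<lambda>j. ws ! j) [0..<n] = ws" unfolding w(2)[symmetric] by (rule map_nth)
    finally show ?thesis .
  qed
  have frest: "filter (\<lambda>x. x \<notin> C) rest = rest" using restA A_notC by (auto simp: filter_id_conv)
  have fw': "filter (\<lambda>x. x \<notin> C) w' = w" unfolding w'_def using fpre frest w(3) by simp
  have sh: "w' \<in> shuffles w (filter (\<lambda>x. x \<in> C) w')"
    using shuffles_filter_partition[of w' "\<lambda>x. x \<notin> C"] fw' shuffles_commutes by simp
  have sv: "set (filter (\<lambda>x. x \<in> C) w') \<subseteq> C" by auto
  have up: "w' \<in> upclose_lang C L" unfolding upclose_lang_def
    using w(1) sh sv by (intro CollectI bexI[of _ w] exI[of _ "filter (\<lambda>x. x \<in> C) w'"] conjI)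
  obtain q where q: "q \<in> reach T {0} pre" "q \<le> n" using segs_reach[of n ws] wsA unfolding pre_def by auto
  have "\<exists>q\<in>reach T (reach T {0} pre) rest. q \<le> n" using rest_reach[OF restA] q by blast
  then have N: "w' \<in> Nlang T n" unfolding Nlang_def w'_def by (auto simp: reach_append)
  define u where "u = filter (\<lambda>x. x \<in> C) w'"
  have uin: "u \<in> proj_lang C (upclose_lang C L \<inter> Nlang T n)" unfolding u_def proj_lang_def using up N by blast
  have "m \<le> count_list u c" if c: "c \<in> C" for c
  proof -
    obtain j where j: "j < n" "c = a + j" using c by (metis add_diff_inverse_nat atLeastLessThan_iff le_Suc_ex nat_add_left_cancel_less)
    have split: "[0..<n] = [0..<j] @ j # [Suc j..<n]" using j(1) by (metis upt_add_eq_append upt_conv_Cons le0 le_add_diff_inverse less_imp_le_nat)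
    have "count_list (ins j (ws ! j)) c \<le> count_list pre c"
      unfolding pre_def split by simp
    then have "count_list (ws ! j) (bs ! j) \<le> count_list w' c"
      unfolding w'_def using count_ins[OF j(1)] wsA j by simp
    moreover have "count_list u c = count_list w' c" unfolding u_def using c
      by (simp add: count_list_eq_length_filter filter_filter) (metis (mono_tags, lifting))
    ultimately show ?thesis using w(4) j by fastforce
  qed
  then show ?thesis using uin by blast
qed

lemma sound:
  assumes L: "L \<subseteq> lists A" and u: "u \<in> proj_lang C (upclose_lang C L \<inter> Nlang T n)"
  shows "set u \<subseteq> C" "u \<in> bounded_lang [a..<a+n]"
    "\<exists>w\<in>L. \<forall>i<n. count_list u (a + i) \<le> count_list w (bs ! i)"
proof -
  obtain w' where w': "w' \<in> upclose_lang C L" "w' \<in> Nlang T n" "u = filter (\<lambda>x. x \<in> C) w'"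
    using u unfolding proj_lang_def by blast
  obtain w v where wv: "w \<in> L" "set v \<subseteq> C" "w' \<in> shuffles w v"
    using w'(1) unfolding upclose_lang_def by blast
  show sC: "set u \<subseteq> C" using w'(3) by auto
  have "sorted u" using Nlang_sound(1)[OF w'(2)] w'(3) by simp
  then show "u \<in> bounded_lang [a..<a+n]" using bounded_upt sC by blast
  have "\<forall>i<n. count_list u (a + i) \<le> count_list w (bs ! i)"
  proof (intro allI impI)
    fix i assume i: "i < n"
    have "count_list u (a + i) = count_list w' (a + i)"
      unfolding w'(3) count_list_eq_length_filter filter_filter using i
      by (intro arg_cong[where f=length] filter_cong) auto
    also have "\<dots> \<le> count_list w' (bs ! i)" using Nlang_sound(2)[OF w'(2) i] .
    also have "\<dots> = count_list w (bs ! i) + count_list v (bs ! i)" using count_shuffles[OF wv(3)] .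
    also have "count_list v (bs ! i) = 0" using wv(2) A_notC bs_A[OF i] by (meson count_notin subsetD)
    finally show "count_list u (a + i) \<le> count_list w (bs ! i)" by simp
  qed
  then show "\<exists>w\<in>L. \<forall>i<n. count_list u (a + i) \<le> count_list w (bs ! i)" using wv(1) by blast
qed

lemma sup_to_diag:
  assumes L: "L \<subseteq> lists A"
    and S: "\<forall>m. \<exists>u\<in>proj_lang C (upclose_lang C L \<inter> Nlang T n). \<forall>c\<in>C. m \<le> count_list u c"
  shows "\<forall>m. \<exists>w\<in>L. \<forall>e\<in>A. m \<le> count_list w e"
proof
  fix m
  obtain u where u: "u \<in> proj_lang C (upclose_lang C L \<inter> Nlang T n)" "\<forall>c\<in>C. m \<le> count_list u c"
    using S by blast
  obtain w where w: "w \<in> L" "\<forall>i<n. count_list u (a + i) \<le> count_list w (bs ! i)"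
    using sound(3)[OF L u(1)] by blast
  have "\<forall>e\<in>A. m \<le> count_list w e"
  proof
    fix e assume "e \<in> A"
    then obtain i where i: "i < n" "e = bs ! i" using setbs lenbs by (metis in_set_conv_nth)
    have "m \<le> count_list u (a + i)" using u(2) i by auto
    then show "m \<le> count_list w e" using w(2) i by (metis le_trans)
  qed
  then show "\<exists>w\<in>L. \<forall>e\<in>A. m \<le> count_list w e" using w(1) by blast
qed

end


definition bitf :: "nat \<Rightarrow> nat \<Rightarrow> nat" where "bitf x e = x div 2 ^ e mod 2"
definition ncard :: "nat \<Rightarrow> nat" where "ncard x = (\<Sum>e<x. bitf x e)"
definition dig :: "nat \<Rightarrow> nat \<Rightarrow> nat \<Rightarrow> nat" where "dig B y j = y div B ^ j mod B"
definition cCode :: "nat \<Rightarrow> nat \<Rightarrow> nat" where "cCode a n = (\<Sum>j<n. 2 ^ (a + j))"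

lemma bitf_iff: "e \<in> set_decode x \<longleftrightarrow> bitf x e = 1"
  unfolding set_decode_def bitf_def by (simp add: odd_iff_mod_2_eq_one)

lemma bitf_01: "bitf x e = 0 \<or> bitf x e = 1"
  unfolding bitf_def by auto

lemma set_decode_lt: "e \<in> set_decode x \<Longrightarrow> e < x"
proof -
  assume "e \<in> set_decode x"
  then have "odd (x div 2 ^ e)" unfolding set_decode_def by simp
  then have "x div 2 ^ e \<noteq> 0" by (metis even_zero)
  then have "2 ^ e \<le> x" by (simp add: div_eq_0_iff not_less)
  moreover have "e < 2 ^ e" by simp
  ultimately show "e < x" by linarith
qed

lemma ncard_eq: "ncard x = card (set_decode x)"
proof -
  have sub: "set_decode x \<subseteq> {..<x}" using set_decode_lt by auto
  have "ncard x = (\<Sum>e\<in>set_decode x. bitf x e)"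
    unfolding ncard_def
  proof (rule sum.mono_neutral_right)
    show "finite {..<x}" by simp
    show "set_decode x \<subseteq> {..<x}" by (rule sub)
    show "\<forall>e\<in>{..<x} - set_decode x. bitf x e = 0" using bitf_iff bitf_01 by blast
  qed
  also have "\<dots> = (\<Sum>e\<in>set_decode x. 1)" using bitf_iff by simp
  finally show ?thesis by simp
qed

lemma cCode_eq: "set_decode (cCode a n) = {a..<a+n}"
proof -
  have "{a..<a+n} = (\<lambda>j. a + j) ` {..<n}" by (simp add: image_add_atLeastLessThan lessThan_atLeast0 add.commute)
  then have "set_encode {a..<a+n} = (\<Sum>j<n. 2 ^ (a + j))"
    unfolding set_encode_def by (simp add: sum.reindex)
  then have "cCode a n = set_encode {a..<a+n}" unfolding cCode_def by simp
  then show ?thesis by simp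
qed

fun numof :: "nat \<Rightarrow> nat list \<Rightarrow> nat" where
  "numof B [] = 0" | "numof B (b # bs) = b + B * numof B bs"

lemma numof_lt: "\<forall>b\<in>set bs. b < B \<Longrightarrow> numof B bs < B ^ length bs"
proof (induction bs)
  case Nil then show ?case by simp
next
  case (Cons b bs)
  then have "numof B bs + 1 \<le> B ^ length bs" by simp
  then have "B * (numof B bs + 1) \<le> B * B ^ length bs" by (rule mult_le_mono2)
  then show ?case using Cons.prems by (simp add: algebra_simps)
qed

lemma dig_numof: "\<forall>b\<in>set bs. b < B \<Longrightarrow> j < length bs \<Longrightarrow> dig B (numof B bs) j = bs ! j"
proof (induction bs arbitrary: j)
  case Nil then show ?case by simp
next
  case (Cons b bs)
  have bB: "b < B" using Cons.prems by simp
  then have B0: "B > 0" by simp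
  show ?case
  proof (cases j)
    case 0 then show ?thesis using bB by (simp add: dig_def)
  next
    case (Suc j')
    have "(b + B * numof B bs) div B = numof B bs" using bB B0 by simp
    then have "dig B (b + B * numof B bs) (Suc j') = dig B (numof B bs) j'"
      unfolding dig_def by (simp add: div_mult2_eq)
    then show ?thesis using Cons Suc by simp
  qed
qed

definition tripc :: "nat \<Rightarrow> nat \<Rightarrow> nat \<Rightarrow> nat" where
  "tripc q e q' = prod_encode (q, prod_encode (e, q'))"

definition tenc :: "nat \<times> nat \<times> nat \<Rightarrow> nat" where
  "tenc t = (case t of (q, e, q') \<Rightarrow> tripc q e q')"

lemma trip_decode_tenc: "trip_decode (tenc t) = t"
  by (cases t) (simp add: tenc_def tripc_def trip_decode_def)

lemma inj_tenc: "inj_on tenc X"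
  by (metis inj_onI trip_decode_tenc)

definition Tcode :: "nat \<Rightarrow> nat \<Rightarrow> nat \<Rightarrow> nat \<Rightarrow> nat" where
  "Tcode a n B y = (\<Sum>i<Suc n. \<Sum>e<a. bitf a e * 2 ^ tripc i e i)
     + (\<Sum>j<n. \<Sum>i<Suc j. 2 ^ tripc i (dig B y j) (Suc n + j))
     + (\<Sum>j<n. 2 ^ tripc (Suc n + j) (a + j) j)"

definition nfac :: "nat \<Rightarrow> nat \<Rightarrow> nat \<Rightarrow> nat \<Rightarrow> nat" where
  "nfac a n B y = prod_encode (Tcode a n B y, prod_encode (1, 2 ^ Suc n - 1))"

lemma sum_bitf: "(\<Sum>e<a. bitf a e * g e) = (\<Sum>e\<in>set_decode a. g e)"
proof -
  have sub: "set_decode a \<subseteq> {..<a}" using set_decode_lt by auto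
  have "(\<Sum>e<a. bitf a e * g e) = (\<Sum>e\<in>set_decode a. bitf a e * g e)"
  proof (rule sum.mono_neutral_right)
    show "finite {..<a}" by simp
    show "set_decode a \<subseteq> {..<a}" by (rule sub)
    show "\<forall>e\<in>{..<a} - set_decode a. bitf a e * g e = 0" using bitf_iff bitf_01 by fastforce
  qed
  also have "\<dots> = (\<Sum>e\<in>set_decode a. g e)" using bitf_iff by simp
  finally show ?thesis .
qed

lemma Tset_split: "Tset A a n bs =
   (\<lambda>(i, e). (i, e, i)) ` ({..<Suc n} \<times> A) \<union>
   (\<lambda>(j, i). (i, bs ! j, Suc n + j)) ` (SIGMA j:{..<n}. {..<Suc j}) \<union>
   (\<lambda>j. (Suc n + j, a + j, j)) ` {..<n}"
  unfolding Tset_def by (auto simp: less_Suc_eq_le image_iff)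

lemma Tcode_eq:
  assumes "\<And>j. j < n \<Longrightarrow> bs ! j = dig B y j"
  shows "Tcode a n B y = set_encode (tenc ` Tset (set_decode a) a n bs)"
proof -
  define A where "A = set_decode a"
  define P1 where "P1 = (\<lambda>(i, e). (i, e, i)) ` ({..<Suc n} \<times> A)"
  define P2 where "P2 = (\<lambda>(j, i). (i, bs ! j, Suc n + j)) ` (SIGMA j:{..<n}. {..<Suc j})"
  define P3 where "P3 = (\<lambda>j. (Suc n + j, a + j, j)) ` {..<n}"
  have fA: "finite A" unfolding A_def by simp
  have fin: "finite P1" "finite P2" "finite P3" unfolding P1_def P2_def P3_def using fA by auto
  have d12: "P1 \<inter> P2 = {}" unfolding P1_def P2_def by auto
  have d3: "(P1 \<union> P2) \<inter> P3 = {}" unfolding P1_def P2_def P3_def by auto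
  have TS: "Tset A a n bs = P1 \<union> P2 \<union> P3" unfolding Tset_split P1_def P2_def P3_def ..
  have "set_encode (tenc ` Tset A a n bs) = (\<Sum>t\<in>P1 \<union> P2 \<union> P3. (2::nat) ^ tenc t)"
    unfolding set_encode_def TS by (simp add: sum.reindex inj_tenc)
  also have "(\<Sum>t\<in>P1 \<union> P2 \<union> P3. (2::nat) ^ tenc t) = (\<Sum>t\<in>P1. (2::nat) ^ tenc t) + (\<Sum>t\<in>P2. (2::nat) ^ tenc t) + (\<Sum>t\<in>P3. (2::nat) ^ tenc t)"
    using fin d12 d3 by (simp add: sum.union_disjoint)
  also have "(\<Sum>t\<in>P1. (2::nat) ^ tenc t) = (\<Sum>i<Suc n. \<Sum>e<a. bitf a e * 2 ^ tripc i e i)"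
  proof -
    have inj: "inj_on (\<lambda>(i, e). (i, e, i)) ({..<Suc n} \<times> A)" by (auto simp: inj_on_def)
    have "(\<Sum>t\<in>P1. (2::nat) ^ tenc t) = (\<Sum>(i, e)\<in>{..<Suc n} \<times> A. (2::nat) ^ tripc i e i)"
      unfolding P1_def by (subst sum.reindex[OF inj]) (simp add: tenc_def case_prod_beta)
    also have "\<dots> = (\<Sum>i<Suc n. \<Sum>e\<in>A. (2::nat) ^ tripc i e i)"
      by (simp add: sum.cartesian_product)
    also have "\<dots> = (\<Sum>i<Suc n. \<Sum>e<a. bitf a e * 2 ^ tripc i e i)"
      unfolding A_def by (simp add: sum_bitf)
    finally show ?thesis .
  qed
  also have "(\<Sum>t\<in>P2. (2::nat) ^ tenc t) = (\<Sum>j<n. \<Sum>i<Suc j. (2::nat) ^ tripc i (dig B y j) (Suc n + j))"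
  proof -
    have inj: "inj_on (\<lambda>(j, i). (i, bs ! j, Suc n + j)) (SIGMA j:{..<n}. {..<Suc j})" by (auto simp: inj_on_def)
    have "(\<Sum>t\<in>P2. (2::nat) ^ tenc t) = (\<Sum>(j, i)\<in>(SIGMA j:{..<n}. {..<Suc j}). (2::nat) ^ tripc i (bs ! j) (Suc n + j))"
      unfolding P2_def by (subst sum.reindex[OF inj]) (simp add: tenc_def case_prod_beta)
    also have "\<dots> = (\<Sum>j<n. \<Sum>i<Suc j. (2::nat) ^ tripc i (bs ! j) (Suc n + j))"
      by (rule sum.Sigma[symmetric]) auto
    also have "\<dots> = (\<Sum>j<n. \<Sum>i<Suc j. (2::nat) ^ tripc i (dig B y j) (Suc n + j))"
      using assms by simp
    finally show ?thesis .
  qed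
  also have "(\<Sum>t\<in>P3. (2::nat) ^ tenc t) = (\<Sum>j<n. (2::nat) ^ tripc (Suc n + j) (a + j) j)"
  proof -
    have inj: "inj_on (\<lambda>j. (Suc n + j, a + j, j)) {..<n}" by (auto simp: inj_on_def)
    show ?thesis unfolding P3_def by (subst sum.reindex[OF inj]) (simp add: tenc_def)
  qed
  finally show ?thesis unfolding Tcode_def A_def by simp
qed

lemma set_encode_lessThan: "set_encode {..<k} = 2 ^ k - 1"
proof (induction k)
  case 0 then show ?case by simp
next
  case (Suc k)
  have "set_encode {..<Suc k} = 2 ^ k + set_encode {..<k}" by (simp add: lessThan_Suc)
  then show ?case using Suc by simp
qed

lemma nfa_lang_nfac:
  assumes "\<And>j. j < n \<Longrightarrow> bs ! j = dig B y j"
  shows "nfa_lang (nfac a n B y) = Nlang (Tset (set_decode a) a n bs) n"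
proof -
  have fT: "finite (Tset (set_decode a) a n bs)" unfolding Tset_split by auto
  have "set_decode (Tcode a n B y) = tenc ` Tset (set_decode a) a n bs"
    using Tcode_eq[OF assms] fT by simp
  then have tr: "nfa_trans (nfac a n B y) = Tset (set_decode a) a n bs"
    unfolding nfa_trans_def nfac_def by (simp add: image_image trip_decode_tenc)
  have "set_encode {0} = 1" by simp
  then have ini: "nfa_init (nfac a n B y) = {0}" unfolding nfa_init_def nfac_def
    by (metis finite.emptyI finite_insert fst_conv prod_encode_inverse set_encode_inverse snd_conv)
  have fi: "nfa_final (nfac a n B y) = {..<Suc n}" unfolding nfa_final_def nfac_def
    using set_encode_lessThan[of "Suc n"] by (metis finite_lessThan prod_encode_inverse set_encode_inverse snd_conv)
  show ?thesis unfolding nfa_lang_def Nlang_def tr ini fi by (simp add: lessThan_Suc_atMost)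
qed


lemma comp_bitf[intro]: "comp_on D f \<Longrightarrow> comp_on D g \<Longrightarrow> comp_on D (\<lambda>x. bitf (f x) (g x))"
  unfolding bitf_def by (intro comp_mod comp_div comp_pow comp_const)

lemma comp_dig[intro]: "comp_on D f \<Longrightarrow> comp_on D g \<Longrightarrow> comp_on D h \<Longrightarrow> comp_on D (\<lambda>x. dig (f x) (g x) (h x))"
  unfolding dig_def by (intro comp_mod comp_div comp_pow)

lemma comp_tripc[intro]: "comp_on D f \<Longrightarrow> comp_on D g \<Longrightarrow> comp_on D h \<Longrightarrow> comp_on D (\<lambda>x. tripc (f x) (g x) (h x))"
  unfolding tripc_def by (intro comp_enc)

lemma comp_ncard0: "comp_on UNIV ncard"
  unfolding ncard_def by (intro comp_sum_UNIV comp_bitf comp_pfst comp_psnd comp_id)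

lemma comp_ncard[intro]: "comp_on D f \<Longrightarrow> comp_on D (\<lambda>x. ncard (f x))"
  by (rule comp_un[OF comp_ncard0]) auto

lemma comp_cCode0: "comp_on UNIV (\<lambda>z. cCode (pfst z) (psnd z))"
  unfolding cCode_def by (intro comp_sum_UNIV comp_pow comp_add comp_const comp_pfst comp_psnd comp_id)

lemma comp_cCode[intro]: "comp_on D f \<Longrightarrow> comp_on D g \<Longrightarrow> comp_on D (\<lambda>x. cCode (f x) (g x))"
  using comp_un[OF comp_cCode0 comp_enc[of D f g]] by simp

definition badf :: "nat \<Rightarrow> nat \<Rightarrow> nat \<Rightarrow> nat \<Rightarrow> nat" where
  "badf a n B y = (\<Sum>j<n. 1 - bitf a (dig B y j)) + (\<Sum>j<n. \<Sum>i<j. if dig B y i = dig B y j then 1 else 0)"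

definition unq :: "(nat \<Rightarrow> nat \<Rightarrow> nat \<Rightarrow> nat \<Rightarrow> nat) \<Rightarrow> nat \<Rightarrow> nat" where
  "unq F z = F (pfst z) (pfst (psnd z)) (pfst (psnd (psnd z))) (psnd (psnd (psnd z)))"

lemma comp_4:
  assumes "comp_on UNIV (unq F)" "comp_on D f" "comp_on D g" "comp_on D h" "comp_on D k"
  shows "comp_on D (\<lambda>x. F (f x) (g x) (h x) (k x))"
  using comp_un[OF assms(1) comp_enc[OF assms(2) comp_enc[OF assms(3) comp_enc[OF assms(4,5)]]]]
  by (simp add: unq_def)

lemma comp_badf0: "comp_on UNIV (unq badf)"
  unfolding unq_def badf_def
  by (intro comp_add comp_sum_UNIV comp_sub comp_const comp_bitf comp_dig comp_if_eq comp_pfst comp_psnd comp_id)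

lemma comp_badf[intro]: "comp_on D f \<Longrightarrow> comp_on D g \<Longrightarrow> comp_on D h \<Longrightarrow> comp_on D k \<Longrightarrow>
  comp_on D (\<lambda>x. badf (f x) (g x) (h x) (k x))"
  by (rule comp_4[OF comp_badf0])

lemma comp_nfac0: "comp_on UNIV (unq nfac)"
  unfolding unq_def nfac_def Tcode_def
  by (intro comp_enc comp_add comp_sum_UNIV comp_sub comp_mult comp_pow comp_const comp_Suc comp_bitf comp_dig comp_tripc comp_pfst comp_psnd comp_id)

lemma comp_nfac[intro]: "comp_on D f \<Longrightarrow> comp_on D g \<Longrightarrow> comp_on D h \<Longrightarrow> comp_on D k \<Longrightarrow>
  comp_on D (\<lambda>x. nfac (f x) (g x) (h x) (k x))"
  by (rule comp_4[OF comp_nfac0])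

lemma bad0_iff: "badf a n B y = 0 \<longleftrightarrow>
   (\<forall>j<n. dig B y j \<in> set_decode a) \<and> (\<forall>j<n. \<forall>i<j. dig B y i \<noteq> dig B y j)"
proof -
  have 1: "(\<Sum>j<n. 1 - bitf a (dig B y j)) = 0 \<longleftrightarrow> (\<forall>j<n. dig B y j \<in> set_decode a)"
  proof -
    have pt: "(1 - bitf a e = 0) = (e \<in> set_decode a)" for e
      using bitf_iff[of e a] bitf_01[of a e] by auto
    show ?thesis by (simp only: sum_eq_0_iff finite_lessThan pt) auto
  qed
  have 2: "(\<Sum>j<n. \<Sum>i<j. if dig B y i = dig B y j then 1 else (0::nat)) = 0 \<longleftrightarrow>
      (\<forall>j<n. \<forall>i<j. dig B y i \<noteq> dig B y j)"
    by (simp add: sum_eq_0_iff) blast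
  show ?thesis unfolding badf_def using 1 2 by simp
qed

lemma valid_bs:
  assumes "badf a n B y = 0" "n = card (set_decode a)"
  defines "bs \<equiv> map (dig B y) [0..<n]"
  shows "distinct bs" "set bs = set_decode a" "length bs = n" "\<And>j. j < n \<Longrightarrow> bs ! j = dig B y j"
proof -
  have v: "\<forall>j<n. dig B y j \<in> set_decode a" "\<forall>j<n. \<forall>i<j. dig B y i \<noteq> dig B y j"
    using assms(1) bad0_iff by auto
  show len: "length bs = n" unfolding bs_def by simp
  show nth: "\<And>j. j < n \<Longrightarrow> bs ! j = dig B y j" unfolding bs_def by simp
  show d: "distinct bs" unfolding distinct_conv_nth len
  proof (intro allI impI)
    fix i j assume "i < n" "j < n" "i \<noteq> j"
    then show "bs ! i \<noteq> bs ! j" using v(2) nth by (metis linorder_neqE_nat)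
  qed
  have sub: "set bs \<subseteq> set_decode a" using v(1) unfolding bs_def by auto
  have "card (set bs) = card (set_decode a)" using distinct_card[OF d] len assms(2) by simp
  then show "set bs = set_decode a" using sub by (simp add: card_subset_eq)
qed

lemma from_bs:
  assumes "distinct bs" "set bs = set_decode a" "length bs = n"
  defines "y \<equiv> numof (Suc a) bs"
  shows "y < Suc a ^ n" "\<And>j. j < n \<Longrightarrow> dig (Suc a) y j = bs ! j" "badf a n (Suc a) y = 0"
proof -
  have lt: "\<forall>b\<in>set bs. b < Suc a" using assms(2) set_decode_lt by fastforce
  show "y < Suc a ^ n" using numof_lt[OF lt] assms(3) unfolding y_def by simp
  show dg: "\<And>j. j < n \<Longrightarrow> dig (Suc a) y j = bs ! j" using dig_numof[OF lt] assms(3) unfolding y_def by simp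
  show "badf a n (Suc a) y = 0" unfolding bad0_iff
  proof (intro conjI allI impI)
    fix j assume "j < n" then show "dig (Suc a) y j \<in> set_decode a" using dg assms(2,3) by (metis nth_mem)
  next
    fix i j assume "j < n" "i < j"
    then show "dig (Suc a) y i \<noteq> dig (Suc a) y j" using dg assms(1,3)
      by (metis less_trans nat_neq_iff nth_eq_iff_index_eq)
  qed
qed


lemma reach_empty: "reach T {} w = {}"
  by (induction w) auto

lemma nfa_lang_0: "nfa_lang 0 = {}"
proof -
  have e: "prod_encode (0, 0) = 0" by (simp add: prod_encode_def)
  have "prod_decode 0 = (0, 0)" by (subst e[symmetric]) (rule prod_encode_inverse)
  then have "nfa_init 0 = {}" unfolding nfa_init_def by simp
  then show ?thesis unfolding nfa_lang_def by (simp add: reach_empty)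
qed

lemma diag_answer_enc: "finite A \<Longrightarrow> diag_answer lang (prod_encode (r, set_encode A)) \<longleftrightarrow>
   (\<forall>m. \<exists>w\<in>lang r. \<forall>c\<in>A. m \<le> count_list w c)"
  unfolding diag_answer_def by simp

lemma psetup_intro: "distinct bs \<Longrightarrow> set bs = set_decode a \<Longrightarrow> length bs = n \<Longrightarrow>
   psetup (set_decode a) a n bs"
  unfolding psetup_def using set_decode_lt by auto

theorem lemma4p2:
  fixes R :: "nat set" and lang :: "nat \<Rightarrow> nat list set"
  assumes "full_trio R lang"
    and "decidable_on (sup_inputs R lang) (diag_answer lang)"
  shows "decidable_on (diag_inputs R lang) (diag_answer lang)"
proof -
  define D where "D = diag_inputs R lang"
  define Sup where "Sup = sup_inputs R lang"
  define DU where "DU = {prod_encode (r, set_encode B) | r B. r \<in> R \<and> finite B}"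
  define DI where "DI = {prod_encode (r, c) | r c. r \<in> R}"
  have ft1: "R \<noteq> {}" using assms(1) unfolding full_trio_def by (elim conjE)
  have ft2: "\<exists>f. comp_on DU f \<and>
        (\<forall>r\<in>R. \<forall>B. finite B \<longrightarrow> f (prod_encode (r, set_encode B)) \<in> R \<and>
            lang (f (prod_encode (r, set_encode B))) = proj_lang B (lang r))"
    using assms(1) unfolding full_trio_def DU_def by (elim conjE)
  have ft3: "\<exists>f. comp_on DU f \<and>
        (\<forall>r\<in>R. \<forall>B. finite B \<longrightarrow> f (prod_encode (r, set_encode B)) \<in> R \<and>
            lang (f (prod_encode (r, set_encode B))) = upclose_lang B (lang r))"
    using assms(1) unfolding full_trio_def DU_def by (elim conjE)
  have ft4: "\<exists>f. comp_on DI f \<and>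
        (\<forall>r\<in>R. \<forall>c. f (prod_encode (r, c)) \<in> R \<and>
            lang (f (prod_encode (r, c))) = lang r \<inter> nfa_lang c)"
    using assms(1) unfolding full_trio_def DI_def by (elim conjE)
  obtain fP where fP1: "comp_on DU fP" and fP2: "\<forall>r\<in>R. \<forall>B. finite B \<longrightarrow> fP (prod_encode (r, set_encode B)) \<in> R \<and>
            lang (fP (prod_encode (r, set_encode B))) = proj_lang B (lang r)" using ft2 by (elim exE conjE)
  obtain fU where fU1: "comp_on DU fU" and fU2: "\<forall>r\<in>R. \<forall>B. finite B \<longrightarrow> fU (prod_encode (r, set_encode B)) \<in> R \<and>
            lang (fU (prod_encode (r, set_encode B))) = upclose_lang B (lang r)" using ft3 by (elim exE conjE)
  obtain fI where fI1: "comp_on DI fI" and fI2': "\<forall>r\<in>R. \<forall>c. fI (prod_encode (r, c)) \<in> R \<and>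
            lang (fI (prod_encode (r, c))) = lang r \<inter> nfa_lang c" using ft4 by (elim exE conjE)
  have fI2: "fI (prod_encode (r, c)) \<in> R \<and> lang (fI (prod_encode (r, c))) = lang r \<inter> nfa_lang c" if "r \<in> R" for r c
    using fI2' that by blast
  have ft: "R \<noteq> {}" by (rule ft1)
  obtain r0 where r0: "r0 \<in> R" using ft by blast
  obtain fS where fS: "comp_on Sup fS" "\<And>x. x \<in> Sup \<Longrightarrow> fS x \<noteq> 0 \<longleftrightarrow> diag_answer lang x"
    using assms(2) unfolding decidable_on_def Sup_def by blast
  have DU_mem: "r \<in> R \<Longrightarrow> prod_encode (r, c) \<in> DU" for r c
    unfolding DU_def by (rule CollectI, rule exI[of _ r], rule exI[of _ "set_decode c"]) simp
  have DI_mem: "r \<in> R \<Longrightarrow> prod_encode (r, c) \<in> DI" for r c unfolding DI_def by blast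
  have fP': "r \<in> R \<Longrightarrow> fP (prod_encode (r, c)) \<in> R \<and> lang (fP (prod_encode (r, c))) = proj_lang (set_decode c) (lang r)" for r c
    using fP2[rule_format, of r "set_decode c"] by simp
  have fU': "r \<in> R \<Longrightarrow> fU (prod_encode (r, c)) \<in> R \<and> lang (fU (prod_encode (r, c))) = upclose_lang (set_decode c) (lang r)" for r c
    using fU2[rule_format, of r "set_decode c"] by simp
  define x0 where "x0 = prod_encode (fI (prod_encode (r0, 0)), 0)"
  have x0: "x0 \<in> Sup"
  proof -
    have "lang (fI (prod_encode (r0, 0))) = {}" using fI2[OF r0] nfa_lang_0 by simp
    then show ?thesis unfolding Sup_def sup_inputs_def x0_def using fI2[OF r0]
      by (intro CollectI exI[of _ "fI (prod_encode (r0, 0))"] exI[of _ "{}"]) (auto intro!: exI[of _ "[]"])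
  qed
  define nn where "nn x = ncard (psnd x)" for x
  define BB where "BB x = Suc (psnd x)" for x
  define cc where "cc x = cCode (psnd x) (nn x)" for x
  define q3 where "q3 y x = fP (prod_encode (fI (prod_encode (fU (prod_encode (pfst x, cc x)), nfac (psnd x) (nn x) (BB x) y)), cc x))" for y x
  define bd where "bd y x = badf (psnd x) (nn x) (BB x) y" for y x
  define gd where "gd y x = (if bd y x = 0 then prod_encode (q3 y x, cc x) else x0)" for y x
  define Sf where "Sf y x = (if bd y x = 0 then (if fS (gd y x) = 0 then 0 else 1) else (0::nat))" for y x
  define ans where "ans x = (\<Sum>y<BB x ^ nn x. Sf y x)" for x
  have Dx: "pfst x \<in> R \<and> finite (set_decode (psnd x)) \<and> lang (pfst x) \<subseteq> lists (set_decode (psnd x)) \<and>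
     x = prod_encode (pfst x, set_encode (set_decode (psnd x)))" if "x \<in> D" for x
    using that unfolding D_def diag_inputs_def by auto
  have q3R: "q3 y x \<in> R \<and> lang (q3 y x) = proj_lang (set_decode (cc x))
      (upclose_lang (set_decode (cc x)) (lang (pfst x)) \<inter> nfa_lang (nfac (psnd x) (nn x) (BB x) y))"
    if "x \<in> D" for x y
    using Dx[OF that] fU' fI2 fP' unfolding q3_def by simp
  have core: "prod_encode (q3 y x, cc x) \<in> Sup \<and>
      (fS (prod_encode (q3 y x, cc x)) \<noteq> 0 \<longrightarrow>
        (\<forall>m. \<exists>w\<in>lang (pfst x). \<forall>e\<in>set_decode (psnd x). m \<le> count_list w e)) \<and>
      ((\<forall>m. Qseg (lang (pfst x)) (map (dig (BB x) y) [0..<nn x]) m) \<longrightarrow> fS (prod_encode (q3 y x, cc x)) \<noteq> 0)"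
    if x: "x \<in> D" and b: "bd y x = 0" for x y
  proof -
    define a where "a = psnd x"
    define n where "n = nn x"
    define bs where "bs = map (dig (BB x) y) [0..<n]"
    have ncard: "n = card (set_decode a)" unfolding n_def nn_def a_def by (simp add: ncard_eq)
    have bd0: "badf a n (BB x) y = 0" using b unfolding bd_def a_def n_def by simp
    note vb = valid_bs[OF bd0 ncard, folded bs_def]
    interpret P: psetup "set_decode a" a n bs by (rule psetup_intro[OF vb(1,2,3)])
    have C: "set_decode (cc x) = {a..<a+n}" unfolding cc_def a_def n_def by (simp add: cCode_eq)
    have N: "nfa_lang (nfac a n (BB x) y) = Nlang (Tset (set_decode a) a n bs) n"
      by (rule nfa_lang_nfac) (use vb(4) in simp)
    have L: "lang (pfst x) \<subseteq> lists (set_decode a)" using Dx[OF x] unfolding a_def by simp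
    have lq: "lang (q3 y x) = proj_lang {a..<a+n} (upclose_lang {a..<a+n} (lang (pfst x)) \<inter> Nlang (Tset (set_decode a) a n bs) n)"
      using q3R[OF x, of y] C N unfolding a_def n_def by simp
    have enc: "prod_encode (q3 y x, cc x) = prod_encode (q3 y x, set_encode {a..<a+n})"
      using C by (metis set_decode_inverse)
    have inSup: "prod_encode (q3 y x, cc x) \<in> Sup"
      unfolding Sup_def sup_inputs_def enc
    proof (intro CollectI exI conjI)
      show "q3 y x \<in> R" using q3R[OF x] by simp
      show "finite {a..<a+n}" by simp
      show "lang (q3 y x) \<subseteq> lists {a..<a+n}" using P.sound(1)[OF L] lq by auto
      show "distinct [a..<a+n]" by simp
      show "set [a..<a+n] = {a..<a+n}" by simp
      show "lang (q3 y x) \<subseteq> bounded_lang [a..<a+n]" using P.sound(2)[OF L] lq by auto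
    qed (rule refl)
    have da: "diag_answer lang (prod_encode (q3 y x, cc x)) \<longleftrightarrow>
        (\<forall>m. \<exists>u\<in>lang (q3 y x). \<forall>c\<in>{a..<a+n}. m \<le> count_list u c)"
      unfolding enc by (rule diag_answer_enc) simp
    have 1: "(\<forall>m. \<exists>u\<in>lang (q3 y x). \<forall>c\<in>{a..<a+n}. m \<le> count_list u c) \<Longrightarrow>
        (\<forall>m. \<exists>w\<in>lang (pfst x). \<forall>e\<in>set_decode a. m \<le> count_list w e)"
      using P.sup_to_diag[OF L] lq by simp
    have 2: "(\<forall>m. \<exists>u\<in>lang (q3 y x). \<forall>c\<in>{a..<a+n}. m \<le> count_list u c)"
      if Q: "\<forall>m. Qseg (lang (pfst x)) bs m"
    proof
      fix m show "\<exists>u\<in>lang (q3 y x). \<forall>c\<in>{a..<a+n}. m \<le> count_list u c"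
        using P.complete[OF L Q[rule_format, of m]] lq by simp
    qed
    show ?thesis using inSup fS(2)[OF inSup] da 1 2 unfolding a_def bs_def n_def by blast
  qed
  have correct: "ans x \<noteq> 0 \<longleftrightarrow> diag_answer lang x" if x: "x \<in> D" for x
  proof -
    have fin: "finite (set_decode (psnd x))" by simp
    have da: "diag_answer lang x \<longleftrightarrow> (\<forall>m. \<exists>w\<in>lang (pfst x). \<forall>e\<in>set_decode (psnd x). m \<le> count_list w e)"
      using Dx[OF x] diag_answer_enc[OF fin, of lang "pfst x"] by simp
    show ?thesis
    proof
      assume "ans x \<noteq> 0"
      then obtain y where "y < BB x ^ nn x" "Sf y x \<noteq> 0" unfolding ans_def by auto
      then have b: "bd y x = 0" and f: "fS (prod_encode (q3 y x, cc x)) \<noteq> 0"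
        unfolding Sf_def gd_def by (auto split: if_splits)
      then show "diag_answer lang x" using core[OF x b] da by blast
    next
      assume "diag_answer lang x"
      then have dg: "\<forall>m. \<exists>w\<in>lang (pfst x). \<forall>e\<in>set_decode (psnd x). m \<le> count_list w e" using da by simp
      obtain bs where bs: "distinct bs" "set bs = set_decode (psnd x)" "\<forall>m. Qseg (lang (pfst x)) bs m"
        using diag_to_Qseg[OF fin dg] by blast
      have len: "length bs = nn x" unfolding nn_def ncard_eq using distinct_card[OF bs(1)] bs(2) by simp
      define y where "y = numof (Suc (psnd x)) bs"
      note fb = from_bs[OF bs(1,2) len, folded y_def]
      have b: "bd y x = 0" using fb(3) unfolding bd_def BB_def by simp
      have mp: "map (dig (BB x) y) [0..<nn x] = bs"
        by (rule nth_equalityI) (use len fb(2) in \<open>auto simp: BB_def\<close>)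
      have "fS (prod_encode (q3 y x, cc x)) \<noteq> 0" using core[OF x b] bs(3) mp by simp
      then have "Sf y x \<noteq> 0" using b unfolding Sf_def gd_def by simp
      moreover have "y < BB x ^ nn x" using fb(1) unfolding BB_def by simp
      ultimately show "ans x \<noteq> 0" unfolding ans_def by auto
    qed
  qed
  define E where "E = {z. psnd z \<in> D}"
  have EDx: "z \<in> E \<Longrightarrow> pfst (psnd z) \<in> R" for z unfolding E_def using Dx by blast
  have c_bd: "comp_on E (\<lambda>z. bd (pfst z) (psnd z))"
    unfolding bd_def nn_def BB_def by (intro comp_badf comp_ncard comp_Suc comp_pfst comp_psnd comp_id)
  have c_cc: "comp_on E (\<lambda>z. cc (psnd z))"
    unfolding cc_def nn_def by (intro comp_cCode comp_ncard comp_pfst comp_psnd comp_id)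
  have c_q1: "comp_on E (\<lambda>z. fU (prod_encode (pfst (psnd z), cc (psnd z))))"
    by (rule comp_un[OF fU1]) (intro comp_enc c_cc comp_pfst comp_psnd comp_id, use EDx DU_mem in blast)
  have c_nf: "comp_on E (\<lambda>z. nfac (psnd (psnd z)) (nn (psnd z)) (BB (psnd z)) (pfst z))"
    unfolding nn_def BB_def by (intro comp_nfac comp_ncard comp_Suc comp_psnd comp_pfst comp_id)
  have c_q2: "comp_on E (\<lambda>z. fI (prod_encode (fU (prod_encode (pfst (psnd z), cc (psnd z))),
       nfac (psnd (psnd z)) (nn (psnd z)) (BB (psnd z)) (pfst z))))"
  proof (rule comp_un[OF fI1 comp_enc[OF c_q1 c_nf]])
    fix z assume "z \<in> E"
    then have "fU (prod_encode (pfst (psnd z), cc (psnd z))) \<in> R" using EDx fU' by blast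
    then show "prod_encode (fU (prod_encode (pfst (psnd z), cc (psnd z))),
       nfac (psnd (psnd z)) (nn (psnd z)) (BB (psnd z)) (pfst z)) \<in> DI" by (rule DI_mem)
  qed
  have c_q3: "comp_on E (\<lambda>z. q3 (pfst z) (psnd z))"
    unfolding q3_def
    by (rule comp_un[OF fP1]) (intro comp_enc c_q2 c_cc, use EDx DU_mem fU' fI2 in blast)
  have c_gd: "comp_on E (\<lambda>z. gd (pfst z) (psnd z))"
    unfolding gd_def by (intro comp_if0 c_bd comp_enc c_q3 c_cc comp_const)
  have c_fS: "comp_on E (\<lambda>z. fS (gd (pfst z) (psnd z)))"
  proof (rule comp_un[OF fS(1) c_gd])
    fix z assume "z \<in> E"
    then have "psnd z \<in> D" unfolding E_def by simp
    then show "gd (pfst z) (psnd z) \<in> Sup" using core x0 unfolding gd_def by auto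
  qed
  have c_Sf: "comp_on E (\<lambda>z. Sf (pfst z) (psnd z))"
    unfolding Sf_def by (intro comp_if0 c_bd c_fS comp_const)
  have c_ans: "comp_on D ans"
    unfolding ans_def
  proof (rule comp_sum[OF _ c_Sf])
    show "comp_on D (\<lambda>x. BB x ^ nn x)" unfolding BB_def nn_def by (intro comp_pow comp_Suc comp_ncard comp_psnd comp_id)
    show "\<And>x i. x \<in> D \<Longrightarrow> i < BB x ^ nn x \<Longrightarrow> prod_encode (i, x) \<in> E" unfolding E_def by simp
  qed
  show ?thesis unfolding decidable_on_def D_def[symmetric] using c_ans correct by blast
qed


end
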